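(* Let $(X,\mathcal{A},\mu,T)$ be an ergodic probability preserving system. a) For every set $A\in\mathcal{A}$ (with $\mu(A)>0$) and integer $m\ge0$, $d_{[0,\infty]^{\mathbb{N}_0}}(\mu(A)\Phi_A\circ T^m,\mu(A)\Phi_A)\le m\mu(A)$ on $\{\varphi_A>m\}$. b) If $(A_l)_{l\ge1}$ is a sequence of asymptotically rare events and $R_l:=\mu(A_l)\Phi_{A_l}:X\to[0,\infty]^{\mathbb{N}_0}$, then $(R_l)$ is asymptotically $T$-invariant in measure. c) Likewise, if $R_l:=\mu(A_l)\Phi_{A_l}\circ T_{A_l}:X\to[0,\infty]^{\mathbb{N}}$, then $(R_l)$ is asymptotically $T$-invariant in measure.
   Context: For $A$ with $\mu(A)>0$: $\varphi_A(x):=\inf\{n\ge1:T^nx\in A\}$, $T_Ax:=T^{\varphi_A(x)}x$, $\Phi_A:=(\varphi_A,\varphi_A\circ T_A,\varphi_A\circ T_A^2,\ldots)$. $[0,\infty]$ carries the metric $d_{[0,\infty]}(s,t)=|e^{-s}-e^{-t}|$ and $[0,\infty]^{\mathbb{N}_0}$ the product metric $d(s,t)=\sum_{j\ge0}2^{-(j+1)}d_{[0,\infty]}(s^{(j)},t^{(j)})$ (similarly on $[0,\infty]^{\mathbb{N}}$). Asymptotically rare: $0<\mu(A_l)\to0$. $(R_l)$ asymptotically $T$-invariant in measure: $d(R_l\circ T,R_l)\to0$ in $\mu$-measure. *)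

theory Defs
  imports "HOL-Probability.Probability"
begin

definition ergodic_pps :: "'a measure \<Rightarrow> ('a \<Rightarrow> 'a) \<Rightarrow> bool" where
  "ergodic_pps M T \<longleftrightarrow> prob_space M \<and> T \<in> measurable M M \<and> distr M M T = M \<and>
     (\<forall>B \<in> sets M. T -` B \<inter> space M = B \<longrightarrow> measure M B = 0 \<or> measure M B = 1)"

definition hit_time :: "('a \<Rightarrow> 'a) \<Rightarrow> 'a set \<Rightarrow> 'a \<Rightarrow> ennreal" where
  "hit_time T A x = (if \<exists>n\<ge>1. (T ^^ n) x \<in> A
      then of_nat (LEAST n. n \<ge> 1 \<and> (T ^^ n) x \<in> A) else \<infinity>)"

text \<open>First return map T_A x = T^{phi_A x} x (convention: T_A x = x where phi_A x = \<infinity>).\<close>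
definition return_map :: "('a \<Rightarrow> 'a) \<Rightarrow> 'a set \<Rightarrow> 'a \<Rightarrow> 'a" where
  "return_map T A x = (if \<exists>n\<ge>1. (T ^^ n) x \<in> A
      then (T ^^ (LEAST n. n \<ge> 1 \<and> (T ^^ n) x \<in> A)) x else x)"

definition Phi :: "('a \<Rightarrow> 'a) \<Rightarrow> 'a set \<Rightarrow> 'a \<Rightarrow> nat \<Rightarrow> ennreal" where
  "Phi T A x = (\<lambda>j. hit_time T A ((return_map T A ^^ j) x))"

definition expneg :: "ennreal \<Rightarrow> real" where
  "expneg s = (if s = \<infinity> then 0 else exp (- enn2real s))"

definition dist_ext :: "ennreal \<Rightarrow> ennreal \<Rightarrow> real" where
  "dist_ext s t = \<bar>expneg s - expneg t\<bar>"

definition dist_seq :: "(nat \<Rightarrow> ennreal) \<Rightarrow> (nat \<Rightarrow> ennreal) \<Rightarrow> real" where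
  "dist_seq s t = (\<Sum>j. (1/2) ^ (Suc j) * dist_ext (s j) (t j))"

definition scale_seq :: "real \<Rightarrow> (nat \<Rightarrow> ennreal) \<Rightarrow> nat \<Rightarrow> ennreal" where
  "scale_seq c s = (\<lambda>j. ennreal c * s j)"

definition asymp_rare :: "'a measure \<Rightarrow> (nat \<Rightarrow> 'a set) \<Rightarrow> bool" where
  "asymp_rare M A \<longleftrightarrow> (\<forall>l. A l \<in> sets M \<and> measure M (A l) > 0) \<and>
     (\<lambda>l. measure M (A l)) \<longlonglongrightarrow> 0"

definition asymp_T_inv_in_measure ::
  "'a measure \<Rightarrow> ('a \<Rightarrow> 'a) \<Rightarrow> (nat \<Rightarrow> 'a \<Rightarrow> nat \<Rightarrow> ennreal) \<Rightarrow> bool" where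
  "asymp_T_inv_in_measure M T R \<longleftrightarrow> (\<forall>\<epsilon>>0.
     (\<lambda>l. measure M {x \<in> space M. dist_seq (R l (T x)) (R l x) > \<epsilon>}) \<longlonglongrightarrow> 0)"

end

theory Submission imports Defs begin

lemma exp_diff_le: fixes a b :: real assumes "0 \<le> a" "a \<le> b"
  shows "\<bar>exp (-a) - exp (-b)\<bar> \<le> b - a"
proof -
  have e: "exp (-a) - exp (-b) = exp (-a) * (1 - exp (-(b-a)))"
    by (simp add: algebra_simps exp_add[symmetric])
  have 1: "1 - (b - a) \<le> exp (-(b-a))" using exp_ge_add_one_self[of "a-b"] by (simp add: algebra_simps)
  have 2: "exp (-a) \<le> 1" using assms by simp
  have 3: "exp (-(b-a)) \<le> 1" using assms by simp
  have "0 \<le> exp (-a) * (1 - exp (-(b-a)))" using 3 by simp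
  moreover have "exp (-a) * (1 - exp (-(b-a))) \<le> 1 * (1 - exp (-(b-a)))"
    using 2 3 by (intro mult_right_mono) auto
  ultimately show ?thesis using e 1 by simp
qed

lemma no_hit_shift:
  assumes "\<not> (\<exists>n\<ge>1. (T ^^ n) x \<in> A)"
  shows "\<not> (\<exists>n\<ge>1. (T ^^ n) ((T ^^ m) x) \<in> A)"
  using assms by (auto simp: funpow_add[symmetric, THEN fun_cong, simplified comp_def])

lemma no_hit_Phi:
  assumes "\<not> (\<exists>n\<ge>1. (T ^^ n) x \<in> A)"
  shows "Phi T A x j = \<infinity>"
proof -
  have "(return_map T A ^^ j) x = x"
    by (induction j) (use assms in \<open>auto simp: return_map_def\<close>)
  then show ?thesis using assms by (simp add: Phi_def hit_time_def)
qed

lemma hit_shift: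
  assumes "hit_time T A x > of_nat m" and h: "\<exists>n\<ge>1. (T ^^ n) x \<in> A"
  defines "N \<equiv> LEAST n. n \<ge> 1 \<and> (T ^^ n) x \<in> A"
  shows "m < N" "(LEAST n. n \<ge> 1 \<and> (T ^^ n) ((T^^m) x) \<in> A) = N - m"
    "\<exists>n\<ge>1. (T ^^ n) ((T^^m) x) \<in> A"
proof -
  show mN: "m < N" using assms by (simp add: hit_time_def N_def)
  have PN: "N \<ge> 1 \<and> (T ^^ N) x \<in> A" unfolding N_def using h by (rule LeastI_ex)
  have eq: "(T ^^ n) ((T^^m) x) = (T^^(n+m)) x" for n by (simp add: funpow_add)
  show "(LEAST n. n \<ge> 1 \<and> (T ^^ n) ((T^^m) x) \<in> A) = N - m"
  proof (rule Least_equality)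
    show "1 \<le> N - m \<and> (T ^^ (N - m)) ((T ^^ m) x) \<in> A" using PN mN by (simp add: eq)
    fix y assume "1 \<le> y \<and> (T ^^ y) ((T ^^ m) x) \<in> A"
    then have "N \<le> y + m" unfolding N_def eq by (intro Least_le) simp
    then show "N - m \<le> y" by simp
  qed
  show "\<exists>n\<ge>1. (T ^^ n) ((T^^m) x) \<in> A" using PN mN by (intro exI[of _ "N-m"]) (simp add: eq)
qed

lemma Phi_shift:
  assumes "hit_time T A x > of_nat m"
  shows "Phi T A ((T^^m) x) (Suc j) = Phi T A x (Suc j)"
proof (cases "\<exists>n\<ge>1. (T ^^ n) x \<in> A")
  case True
  note hs = hit_shift[OF assms True]
  have "return_map T A ((T^^m) x) = return_map T A x"
    using hs True by (simp add: return_map_def funpow_add[symmetric, THEN fun_cong, simplified comp_def])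
  then show ?thesis by (simp add: Phi_def funpow_Suc_right del: funpow.simps)
next
  case False
  then show ?thesis using no_hit_Phi no_hit_shift by metis
qed

lemma hit_shift_dist:
  assumes "hit_time T A x > of_nat m" "c \<ge> 0"
  shows "dist_ext (ennreal c * hit_time T A ((T^^m) x)) (ennreal c * hit_time T A x) \<le> real m * c"
proof (cases "\<exists>n\<ge>1. (T ^^ n) x \<in> A")
  case True
  note hs = hit_shift[OF assms(1) True]
  define N where "N = (LEAST n. n \<ge> 1 \<and> (T ^^ n) x \<in> A)"
  have h1: "hit_time T A x = of_nat N" using True by (simp add: hit_time_def N_def)
  have h2: "hit_time T A ((T^^m) x) = of_nat (N - m)" using hs by (simp add: hit_time_def N_def)
  have e: "ennreal c * of_nat k = ennreal (c * real k)" for k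
    using assms(2) by (simp add: ennreal_mult ennreal_of_nat_eq_real_of_nat)
  have mN: "m < N" using hs(1) N_def by simp
  have "dist_ext (ennreal c * hit_time T A ((T^^m) x)) (ennreal c * hit_time T A x)
     = \<bar>exp (- (c * real (N-m))) - exp (- (c * real N))\<bar>"
    unfolding h1 h2 e dist_ext_def expneg_def using assms(2) by simp
  also have "\<dots> \<le> c * real N - c * real (N - m)"
    using assms(2) hs(1) by (intro exp_diff_le) (auto intro: mult_left_mono)
  also have "\<dots> = real m * c" using mN by (simp add: of_nat_diff algebra_simps)
  finally show ?thesis .
next
  case False
  then have "\<not> (\<exists>n\<ge>1. (T ^^ n) ((T^^m) x) \<in> A)" by (rule no_hit_shift)
  then have "hit_time T A ((T^^m) x) = hit_time T A x" using False by (simp add: hit_time_def)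
  then show ?thesis using assms(2) by (simp add: dist_ext_def)
qed


lemma hit_gt1:
  assumes "T x \<notin> A" shows "hit_time T A x > of_nat 1"
proof (cases "\<exists>n\<ge>1. (T ^^ n) x \<in> A")
  case True
  define N where "N = (LEAST n. n \<ge> 1 \<and> (T ^^ n) x \<in> A)"
  have PN: "N \<ge> 1 \<and> (T ^^ N) x \<in> A" unfolding N_def using True by (rule LeastI_ex)
  have "N \<noteq> 1" using PN assms by auto
  with PN have "N > 1" by simp
  have "hit_time T A x = of_nat N" using True by (simp add: hit_time_def N_def)
  then show ?thesis using \<open>N > 1\<close> by simp
next
  case False
  then have "hit_time T A x = \<infinity>" unfolding hit_time_def by meson
  then show ?thesis by simp
qed

lemma dist_ext_same [simp]: "dist_ext s s = 0" by (simp add: dist_ext_def)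

lemma dist_seq_head:
  assumes "\<And>j. s (Suc j) = t (Suc j)"
  shows "dist_seq s t = 1/2 * dist_ext (s 0) (t 0)"
proof -
  have "dist_seq s t = (\<Sum>j\<in>{0}. (1/2) ^ (Suc j) * dist_ext (s j) (t j))"
    unfolding dist_seq_def
  proof (rule suminf_finite)
    fix j :: nat assume "j \<notin> {0}"
    then obtain k where "j = Suc k" by (cases j) auto
    then show "(1/2) ^ (Suc j) * dist_ext (s j) (t j) = 0" using assms by simp
  qed simp
  then show ?thesis by simp
qed

lemma dist_seq_same [simp]: "dist_seq s s = 0" by (simp add: dist_seq_def)

lemma measure_le_sets:
  assumes "finite_measure M" "B \<in> sets M" "S \<subseteq> B"
  shows "measure M S \<le> measure M B"
proof (cases "S \<in> sets M")
  case True then show ?thesis using assms by (intro finite_measure.finite_measure_mono) auto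
next
  case False then show ?thesis by (simp add: measure_notin_sets)
qed

lemma inv_from_bound:
  assumes P: "prob_space M" and Tm: "T \<in> measurable M M" and D: "distr M M T = M"
    and AR: "asymp_rare M As"
    and B: "\<And>l x. x \<in> space M \<Longrightarrow> T x \<notin> As l \<Longrightarrow> dist_seq (R l (T x)) (R l x) \<le> measure M (As l)"
  shows "asymp_T_inv_in_measure M T R"
  unfolding asymp_T_inv_in_measure_def
proof (intro allI impI)
  fix e :: real assume e: "e > 0"
  have As: "As l \<in> sets M" "(\<lambda>l. measure M (As l)) \<longlonglongrightarrow> 0" for l using AR by (auto simp: asymp_rare_def)
  have ev: "eventually (\<lambda>l. measure M (As l) < e) sequentially"
    using order_tendstoD(2)[OF As(2) e] .
  have pre: "measure M (T -` As l \<inter> space M) = measure M (As l)" for l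
    using measure_distr[OF Tm, of "As l"] As(1)[of l] D by simp
  show "(\<lambda>l. measure M {x \<in> space M. dist_seq (R l (T x)) (R l x) > e}) \<longlonglongrightarrow> 0"
  proof (rule tendsto_sandwich[OF _ _ tendsto_const As(2)])
    show "\<forall>\<^sub>F l in sequentially. 0 \<le> measure M {x \<in> space M. dist_seq (R l (T x)) (R l x) > e}"
      by simp
    show "\<forall>\<^sub>F l in sequentially. measure M {x \<in> space M. dist_seq (R l (T x)) (R l x) > e} \<le> measure M (As l)"
      using ev
    proof eventually_elim
      case (elim l)
      have "{x \<in> space M. dist_seq (R l (T x)) (R l x) > e} \<subseteq> T -` As l \<inter> space M"
        using B[of _ l] elim by force
      then have "measure M {x \<in> space M. dist_seq (R l (T x)) (R l x) > e} \<le> measure M (T -` As l \<inter> space M)"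
        using P Tm As(1)[of l] by (intro measure_le_sets) (auto simp: prob_space_def)
      then show ?case using pre by simp
    qed
  qed
qed

theorem mainTheorem12:
  fixes M :: "'a measure" and T :: "'a \<Rightarrow> 'a"
  assumes "ergodic_pps M T"
  shows "(\<forall>A \<in> sets M. measure M A > 0 \<longrightarrow> (\<forall>m::nat. \<forall>x \<in> space M.
            hit_time T A x > of_nat m \<longrightarrow>
            dist_seq (scale_seq (measure M A) (Phi T A ((T ^^ m) x)))
                     (scale_seq (measure M A) (Phi T A x)) \<le> real m * measure M A))
       \<and> (\<forall>As. asymp_rare M As \<longrightarrow>
            asymp_T_inv_in_measure M T (\<lambda>l x. scale_seq (measure M (As l)) (Phi T (As l) x)))
       \<and> (\<forall>As. asymp_rare M As \<longrightarrow>
            asymp_T_inv_in_measure M T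
              (\<lambda>l x. scale_seq (measure M (As l)) (\<lambda>j. Phi T (As l) x (Suc j))))"
proof -
  have P: "prob_space M" and Tm: "T \<in> measurable M M" and D: "distr M M T = M"
    using assms by (auto simp: ergodic_pps_def)
  have a: "dist_seq (scale_seq c (Phi T A ((T ^^ m) x))) (scale_seq c (Phi T A x)) \<le> real m * c"
    if "hit_time T A x > of_nat m" "c \<ge> 0" for A m x and c :: real
  proof -
    have "dist_seq (scale_seq c (Phi T A ((T ^^ m) x))) (scale_seq c (Phi T A x))
        = 1/2 * dist_ext (ennreal c * hit_time T A ((T^^m) x)) (ennreal c * hit_time T A x)"
    proof (subst dist_seq_head)
      show "scale_seq c (Phi T A ((T ^^ m) x)) (Suc j) = scale_seq c (Phi T A x) (Suc j)" for j
        unfolding scale_seq_def using Phi_shift[OF that(1)] by simp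
    qed (simp add: scale_seq_def Phi_def)
    also have "\<dots> \<le> 1/2 * (real m * c)"
      using hit_shift_dist[OF that] by simp
    also have "\<dots> \<le> real m * c" using that(2) by simp
    finally show ?thesis .
  qed
  show ?thesis
  proof (intro conjI allI impI ballI)
    fix A m x assume "A \<in> sets M" "measure M A > 0" "x \<in> space M" "hit_time T A x > of_nat m"
    then show "dist_seq (scale_seq (measure M A) (Phi T A ((T ^^ m) x)))
                     (scale_seq (measure M A) (Phi T A x)) \<le> real m * measure M A"
      using a by simp
  next
    fix As assume AR: "asymp_rare M As"
    show "asymp_T_inv_in_measure M T (\<lambda>l x. scale_seq (measure M (As l)) (Phi T (As l) x))"
    proof (rule inv_from_bound[OF P Tm D AR])
      fix l x assume "x \<in> space M" "T x \<notin> As l"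
      from a[OF hit_gt1[of T x "As l", OF this(2)], of "measure M (As l)"]
      show "dist_seq (scale_seq (measure M (As l)) (Phi T (As l) (T x))) (scale_seq (measure M (As l)) (Phi T (As l) x)) \<le> measure M (As l)"
        by simp
    qed
  next
    fix As assume AR: "asymp_rare M As"
    show "asymp_T_inv_in_measure M T
              (\<lambda>l x. scale_seq (measure M (As l)) (\<lambda>j. Phi T (As l) x (Suc j)))"
    proof (rule inv_from_bound[OF P Tm D AR])
      fix l x assume "x \<in> space M" "T x \<notin> As l"
      have "Phi T (As l) ((T^^1) x) (Suc j) = Phi T (As l) x (Suc j)" for j
        using Phi_shift[OF hit_gt1[of T x "As l", OF \<open>T x \<notin> As l\<close>]] .
      then have "(\<lambda>j. Phi T (As l) (T x) (Suc j)) = (\<lambda>j. Phi T (As l) x (Suc j))" by simp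
      then show "dist_seq (scale_seq (measure M (As l)) (\<lambda>j. Phi T (As l) (T x) (Suc j)))
          (scale_seq (measure M (As l)) (\<lambda>j. Phi T (As l) x (Suc j))) \<le> measure M (As l)"
        by simp
    qed
  qed
qed

end
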